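(* Call a nonnegative integer $t$ totally balanced if its binary expansion (with the convention that $0$ has the empty expansion) has even length $2k$ for some $k \geq 0$, contains exactly $k$ ones and $k$ zeros, and, reading from the most significant bit, every prefix contains no more zeros than ones. For a nonnegative integer $t = \sum_{j \geq 0} e_j 2^j$ with $e_j \in \{0,1\}$, let $v_t = \sum_{j \geq 0} e_j 2^{-j-1}$ (the base-2 van der Corput value). Write each $v_t$, for $t$ totally balanced, as a fraction in lowest terms. Then every such denominator is a power of $4$, and for each $k \geq 0$ the denominator $4^k$ occurs for exactly $$C_k = \frac{1}{k+1}\binom{2k}{k}$$ totally balanced integers $t$ (namely those whose binary expansion has length $2k$).
   Context: $C_k$ denotes the $k$-th Catalan number. *)

theory Defs
  imports Complex_Main
begin

text \<open>Binary expansion, most significant bit first; 0 has the empty expansion.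
  True stands for the digit 1, False for the digit 0.\<close>
fun bin_digits :: "nat \<Rightarrow> bool list" where
  "bin_digits n = (if n = 0 then [] else bin_digits (n div 2) @ [odd n])"

declare bin_digits.simps [simp del]

definition count_ones :: "bool list \<Rightarrow> nat" where
  "count_ones xs = length (filter (\<lambda>b. b) xs)"

definition count_zeros :: "bool list \<Rightarrow> nat" where
  "count_zeros xs = length (filter (\<lambda>b. \<not> b) xs)"

definition totally_balanced :: "nat \<Rightarrow> bool" where
  "totally_balanced t \<longleftrightarrow>
     (\<exists>k. length (bin_digits t) = 2 * k \<and>
          count_ones (bin_digits t) = k \<and> count_zeros (bin_digits t) = k) \<and>
     (\<forall>i \<le> length (bin_digits t).
          count_zeros (take i (bin_digits t)) \<le> count_ones (take i (bin_digits t)))"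

definition vdc :: "nat \<Rightarrow> rat" where
  "vdc t = (\<Sum>j < length (bin_digits t). of_nat ((t div 2 ^ j) mod 2) / 2 ^ (j + 1))"

definition denom :: "rat \<Rightarrow> int" where
  "denom q = snd (quotient_of q)"

end

theory Submission
  imports Defs
begin

lemma bin_digits_pos: "n > 0 \<Longrightarrow> bin_digits n = bin_digits (n div 2) @ [odd n]"
  by (subst bin_digits.simps) simp

lemma bin_digits_0[simp]: "bin_digits 0 = []"
  by (subst bin_digits.simps) simp

lemma len_bound: "n < 2 ^ length (bin_digits n) \<and> (n > 0 \<longrightarrow> 2 ^ (length (bin_digits n) - 1) \<le> n)"
proof (induction n rule: less_induct)
  case (less n)
  show ?case
  proof (cases "n = 0")
    case True then show ?thesis by simp
  next
    case False
    then have e: "bin_digits n = bin_digits (n div 2) @ [odd n]" using bin_digits_pos by simp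
    have ih: "n div 2 < 2 ^ length (bin_digits (n div 2)) \<and> (n div 2 > 0 \<longrightarrow> 2 ^ (length (bin_digits (n div 2)) - 1) \<le> n div 2)"
      using less False by simp
    show ?thesis
    proof (cases "n div 2 = 0")
      case True
      then have "n = 1" using False by simp
      then show ?thesis using e by simp
    next
      case f2: False
      then have "length (bin_digits (n div 2)) > 0"
        using f2 bin_digits_pos[of "n div 2"] by simp
      then obtain m where m: "length (bin_digits (n div 2)) = Suc m"
        using gr0_implies_Suc by blast
      have "n \<le> 2 * (n div 2) + 1" by simp
      then have a1: "n < 2 * 2 ^ Suc m" using ih m by simp
      have "2 * (n div 2) \<le> n" by simp
      moreover have "2 ^ m \<le> n div 2" using ih m f2 by simp
      ultimately have a2: "2 * 2 ^ m \<le> n" by linarith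
      from a1 a2 show ?thesis using e m False by simp
    qed
  qed
qed

lemma top_bit: assumes "n > 0" shows "(n div 2 ^ (length (bin_digits n) - 1)) mod 2 = 1"
proof -
  let ?L = "length (bin_digits n)"
  have L: "?L > 0" using assms bin_digits_pos by simp
  have a: "2 ^ (?L - 1) \<le> n" "n < 2 * 2 ^ (?L - 1)" using len_bound[of n] assms L
    by (simp_all add: power_Suc[symmetric])
  then have "n div 2 ^ (?L - 1) = 1"
    by (intro div_nat_eqI) simp_all
  then show ?thesis by simp
qed

lemma denom_odd: assumes "odd N" shows "denom (of_int N / of_int (2 ^ L)) = 2 ^ L"
proof -
  have c: "coprime N (2 ^ L)" using assms by (simp add: coprime_commute)
  have "of_int N / of_int (2 ^ L) = Fract N (2 ^ L)" by (simp add: Fract_of_int_quotient)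
  then show ?thesis unfolding denom_def using c by (simp add: quotient_of_Fract)
qed

lemma vdc_denom: "denom (vdc t) = 2 ^ length (bin_digits t)"
proof (cases "t = 0")
  case True then show ?thesis by (simp add: vdc_def denom_def)
next
  case False
  define L where "L = length (bin_digits t)"
  have L: "L > 0" using False bin_digits_pos L_def by simp
  define b where "b j = int ((t div 2 ^ j) mod 2)" for j
  define N where "N = (\<Sum>j < L. b j * 2 ^ (L - 1 - j))"
  have "vdc t = (\<Sum>j < L. of_int (b j * 2 ^ (L - 1 - j)) / of_int (2 ^ L))"
    unfolding vdc_def L_def[symmetric]
  proof (rule sum.cong[OF refl])
    fix j assume "j \<in> {..<L}"
    then have "L = (L - 1 - j) + (j + 1)" by simp
    then have "(2::rat) ^ L = 2 ^ (L - 1 - j) * 2 ^ (j + 1)"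
      using power_add[of "2::rat" "L - 1 - j" "j + 1"] by simp
    then show "of_nat ((t div 2 ^ j) mod 2) / 2 ^ (j + 1) = (of_int (b j * 2 ^ (L - 1 - j)) / of_int (2 ^ L) :: rat)"
      by (simp add: b_def)
  qed
  also have "\<dots> = of_int N / of_int (2 ^ L)"
    by (simp add: N_def sum_divide_distrib)
  finally have v: "vdc t = of_int N / of_int (2 ^ L)" .
  obtain M where M: "L = Suc M" using L gr0_implies_Suc by blast
  have "N = (\<Sum>j < L - 1. b j * 2 ^ (L - 1 - j)) + b (L - 1)"
    unfolding N_def M by simp
  moreover have "even (\<Sum>j < L - 1. b j * 2 ^ (L - 1 - j))"
    using M by (intro dvd_sum) auto
  moreover have "b (L - 1) = 1" using top_bit[OF _] False unfolding b_def L_def by simp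
  ultimately have "odd N" by simp
  then show ?thesis using v denom_odd L_def by simp
qed

definition pc :: "bool list \<Rightarrow> bool" where
  "pc xs \<longleftrightarrow> (\<forall>i \<le> length xs. count_zeros (take i xs) \<le> count_ones (take i xs))"

definition S :: "nat \<Rightarrow> nat \<Rightarrow> bool list set" where
  "S a b = {xs. count_ones xs = a \<and> count_zeros xs = b \<and> pc xs}"

lemma co_app[simp]: "count_ones (xs @ [x]) = count_ones xs + (if x then 1 else 0)"
  by (simp add: count_ones_def)
lemma cz_app[simp]: "count_zeros (xs @ [x]) = count_zeros xs + (if x then 0 else 1)"
  by (simp add: count_zeros_def)
lemma co_nil[simp]: "count_ones [] = 0" by (simp add: count_ones_def)
lemma cz_nil[simp]: "count_zeros [] = 0" by (simp add: count_zeros_def)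

lemma len_count: "length xs = count_ones xs + count_zeros xs"
  unfolding count_ones_def count_zeros_def using sum_length_filter_compl[of "\<lambda>b. b" xs] by simp

lemma pc_nil[simp]: "pc []" by (simp add: pc_def)

lemma pc_snoc: "pc (xs @ [x]) \<longleftrightarrow> pc xs \<and> count_zeros (xs @ [x]) \<le> count_ones (xs @ [x])"
proof
  assume h: "pc (xs @ [x])"
  have "pc xs" unfolding pc_def
  proof (intro allI impI)
    fix i assume "i \<le> length xs"
    then show "count_zeros (take i xs) \<le> count_ones (take i xs)"
      using h[unfolded pc_def, rule_format, of i] by simp
  qed
  moreover have "count_zeros (xs @ [x]) \<le> count_ones (xs @ [x])"
    using h[unfolded pc_def, rule_format, of "Suc (length xs)"] by simp
  ultimately show "pc xs \<and> count_zeros (xs @ [x]) \<le> count_ones (xs @ [x])" by simp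
next
  assume h: "pc xs \<and> count_zeros (xs @ [x]) \<le> count_ones (xs @ [x])"
  show "pc (xs @ [x])" unfolding pc_def
  proof (intro allI impI)
    fix i assume i: "i \<le> length (xs @ [x])"
    show "count_zeros (take i (xs @ [x])) \<le> count_ones (take i (xs @ [x]))"
    proof (cases "i \<le> length xs")
      case True then show ?thesis using h[THEN conjunct1, unfolded pc_def] by simp
    next
      case False then have "i = Suc (length xs)" using i by simp
      then show ?thesis using h by simp
    qed
  qed
qed

lemma S_fin: "finite (S a b)"
proof -
  have "S a b \<subseteq> {xs. length xs = a + b}" unfolding S_def using len_count by auto
  then show ?thesis using finite_lists_length_eq[of "UNIV :: bool set"] finite_subset by auto
qed

lemma S_00: "S 0 0 = {[]}"
proof -
  have "count_ones x = 0 \<Longrightarrow> count_zeros x = 0 \<Longrightarrow> x = []" for x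
    using len_count[of x] by simp
  then show ?thesis unfolding S_def by auto
qed

lemma S_empty: "b > a \<Longrightarrow> S a b = {}"
proof -
  assume "b > a"
  { fix xs assume "xs \<in> S a b"
    then have "count_zeros (take (length xs) xs) \<le> count_ones (take (length xs) xs)" "count_ones xs = a" "count_zeros xs = b"
      unfolding S_def pc_def by auto
    then have False using \<open>b > a\<close> by simp }
  then show ?thesis by blast
qed

lemma S_snoc_iff: "xs @ [x] \<in> S a b \<longleftrightarrow> b \<le> a \<and> (if x then a > 0 \<and> xs \<in> S (a - 1) b else b > 0 \<and> xs \<in> S a (b - 1))"
  unfolding S_def by (cases x) (auto simp: pc_snoc)

lemma S_Suc_0: "S (Suc a) 0 = (\<lambda>ys. ys @ [True]) ` S a 0"
proof (intro set_eqI iffI)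
  fix xs assume h: "xs \<in> S (Suc a) 0"
  then have "xs \<noteq> []" unfolding S_def by auto
  then obtain ys x where xs: "xs = ys @ [x]" by (metis rev_exhaust)
  then show "xs \<in> (\<lambda>ys. ys @ [True]) ` S a 0" using h S_snoc_iff[of ys x "Suc a" 0]
    by (cases x) auto
next
  fix xs assume "xs \<in> (\<lambda>ys. ys @ [True]) ` S a 0"
  then show "xs \<in> S (Suc a) 0" using S_snoc_iff by auto
qed

lemma S_Suc_Suc: "b \<le> a \<Longrightarrow> S (Suc a) (Suc b) = (\<lambda>ys. ys @ [True]) ` S a (Suc b) \<union> (\<lambda>ys. ys @ [False]) ` S (Suc a) b"
proof (intro set_eqI iffI)
  fix xs assume h: "xs \<in> S (Suc a) (Suc b)"
  then have "xs \<noteq> []" unfolding S_def by auto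
  then obtain ys x where xs: "xs = ys @ [x]" by (metis rev_exhaust)
  then show "xs \<in> (\<lambda>ys. ys @ [True]) ` S a (Suc b) \<union> (\<lambda>ys. ys @ [False]) ` S (Suc a) b"
    using h S_snoc_iff[of ys x "Suc a" "Suc b"] by (cases x) auto
next
  fix xs assume "b \<le> a" "xs \<in> (\<lambda>ys. ys @ [True]) ` S a (Suc b) \<union> (\<lambda>ys. ys @ [False]) ` S (Suc a) b"
  then show "xs \<in> S (Suc a) (Suc b)" using S_snoc_iff by auto
qed

lemma card_S_Suc_0: "card (S (Suc a) 0) = card (S a 0)"
  unfolding S_Suc_0 by (rule card_image) (auto simp: inj_on_def)

lemma card_S_Suc_Suc: "b \<le> a \<Longrightarrow> card (S (Suc a) (Suc b)) = card (S a (Suc b)) + card (S (Suc a) b)"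
  unfolding S_Suc_Suc
  by (subst card_Un_disjoint) (auto simp: S_fin card_image inj_on_def)

definition G :: "nat \<Rightarrow> nat \<Rightarrow> int" where
  "G a b = int ((a + b) choose b) - (if b = 0 then 0 else int ((a + b) choose (b - 1)))"

lemma card_S_0: "card (S a 0) = 1"
  by (induction a) (simp_all add: card_S_Suc_0 S_00)

lemma G_diag: "G a (Suc a) = 0"
proof -
  have "(a + Suc a) choose Suc a = (a + Suc a) choose a"
    using binomial_symmetric[of "Suc a" "a + Suc a"] by simp
  then show ?thesis by (simp add: G_def)
qed

lemma G_rec: "G (Suc a) (Suc b) = G a (Suc b) + G (Suc a) b"
  unfolding G_def by (cases b) simp_all

lemma card_S: "b \<le> a \<Longrightarrow> int (card (S a b)) = G a b"
proof (induction "a + b" arbitrary: a b rule: less_induct)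
  case less
  show ?case
  proof (cases b)
    case 0 then show ?thesis by (simp add: card_S_0 G_def)
  next
    case (Suc b')
    then obtain a' where a: "a = Suc a'" using less.prems by (cases a) auto
    have e: "card (S a b) = card (S a' (Suc b')) + card (S (Suc a') b')"
      using card_S_Suc_Suc[of b' a'] a Suc less.prems by simp
    have i2: "int (card (S (Suc a') b')) = G (Suc a') b'"
      using less.hyps[of "Suc a'" b'] a Suc less.prems by simp
    have i1: "int (card (S a' (Suc b'))) = G a' (Suc b')"
    proof (cases "Suc b' \<le> a'")
      case True then show ?thesis using less.hyps[of a' "Suc b'"] a Suc by simp
    next
      case False
      then have "b' = a'" using a Suc less.prems by simp
      then show ?thesis using S_empty[of a' "Suc b'"] G_diag by simp
    qed
    show ?thesis using e i1 i2 G_rec a Suc by simp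
  qed
qed

lemma G_catalan: "real_of_int (G k k) = (1 / (real k + 1)) * real ((2 * k) choose k)"
proof (cases k)
  case 0 then show ?thesis by (simp add: G_def)
next
  case (Suc m)
  have "Suc m * (Suc (m + Suc m) choose Suc m) = Suc (Suc m) * (Suc (m + Suc m) choose m)"
    by (rule Suc_times_binomial_add)
  then have "k * ((2*k) choose k) = (k + 1) * ((2*k) choose (k - 1))"
    using Suc by (simp add: mult_2)
  then have "real (k * ((2*k) choose k)) = real ((k + 1) * ((2*k) choose (k - 1)))" by simp
  then have h: "real k * real ((2*k) choose k) = (real k + 1) * real ((2*k) choose (k - 1))"
    by (simp add: algebra_simps)
  have "real_of_int (G k k) = real ((2*k) choose k) - real ((2*k) choose (k - 1))"
    using Suc by (simp add: G_def mult_2 of_nat_diff)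
  also have "\<dots> = (1 / (real k + 1)) * real ((2 * k) choose k)"
    using h by (simp add: field_simps)
  finally show ?thesis .
qed


definition of_digits :: "bool list \<Rightarrow> nat" where
  "of_digits xs = foldl (\<lambda>acc b. 2 * acc + (if b then 1 else 0)) 0 xs"

lemma of_digits_snoc[simp]: "of_digits (xs @ [b]) = 2 * of_digits xs + (if b then 1 else 0)"
  by (simp add: of_digits_def)
lemma of_digits_nil[simp]: "of_digits [] = 0" by (simp add: of_digits_def)

lemma of_bin: "of_digits (bin_digits n) = n"
proof (induction n rule: less_induct)
  case (less n)
  show ?case
  proof (cases "n = 0")
    case False
    then show ?thesis using bin_digits_pos[of n] less[of "n div 2"] by simp
  qed simp
qed

lemma bin_of: "xs = [] \<or> hd xs \<Longrightarrow> bin_digits (of_digits xs) = xs"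
proof (induction xs rule: rev_induct)
  case (snoc b xs)
  show ?case
  proof (cases "xs = []")
    case True
    then have "b" using snoc.prems by simp
    then show ?thesis using True bin_digits_pos[of 1] by (simp add: of_digits_def)
  next
    case False
    then have ih: "bin_digits (of_digits xs) = xs" using snoc by simp
    then have "of_digits xs > 0" using False by (cases "of_digits xs = 0") auto
    then show ?thesis using bin_digits_pos[of "of_digits (xs @ [b])"] ih by simp
  qed
qed simp

lemma S_hd: "xs \<in> S a b \<Longrightarrow> xs = [] \<or> hd xs"
proof (cases xs)
  case (Cons x ys)
  assume "xs \<in> S a b"
  then have "count_zeros (take 1 xs) \<le> count_ones (take 1 xs)"
    unfolding S_def pc_def using Cons by auto
  then show ?thesis using Cons by (cases x) (simp_all add: count_zeros_def count_ones_def)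
qed simp

lemma tb_set: "{t. totally_balanced t \<and> length (bin_digits t) = 2 * k} = {t. bin_digits t \<in> S k k}"
proof -
  have "totally_balanced t \<and> length (bin_digits t) = 2 * k \<longleftrightarrow> bin_digits t \<in> S k k" for t
    unfolding totally_balanced_def S_def pc_def using len_count[of "bin_digits t"] by auto
  then show ?thesis by auto
qed

lemma card_tb: "card {t. bin_digits t \<in> S k k} = card (S k k)"
proof (rule bij_betw_same_card)
  show "bij_betw bin_digits {t. bin_digits t \<in> S k k} (S k k)"
    unfolding bij_betw_def
  proof
    show "inj_on bin_digits {t. bin_digits t \<in> S k k}"
    proof (rule inj_onI)
      fix x y assume "bin_digits x = bin_digits y"
      then have "of_digits (bin_digits x) = of_digits (bin_digits y)" by simp
      then show "x = y" by (simp add: of_bin)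
    qed
    show "bin_digits ` {t. bin_digits t \<in> S k k} = S k k"
    proof
      show "S k k \<subseteq> bin_digits ` {t. bin_digits t \<in> S k k}"
      proof
        fix xs assume h: "xs \<in> S k k"
        then have "bin_digits (of_digits xs) = xs" using S_hd bin_of by blast
        then show "xs \<in> bin_digits ` {t. bin_digits t \<in> S k k}" using h by (intro image_eqI[of _ _ "of_digits xs"]) auto
      qed
    qed auto
  qed
qed

theorem proposition1:
  shows "(\<forall>t. totally_balanced t \<longrightarrow> (\<exists>k::nat. denom (vdc t) = 4 ^ k)) \<and>
         (\<forall>k::nat.
            {t. totally_balanced t \<and> denom (vdc t) = 4 ^ k}
              = {t. totally_balanced t \<and> length (bin_digits t) = 2 * k} \<and>
            real (card {t. totally_balanced t \<and> denom (vdc t) = 4 ^ k})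
              = (1 / (real k + 1)) * real ((2 * k) choose k))"
proof -
  have p4: "(4::int) ^ k = 2 ^ (2 * k)" for k by (simp add: power_mult)
  have eq: "denom (vdc t) = 4 ^ k \<longleftrightarrow> length (bin_digits t) = 2 * k" for t k
    unfolding vdc_denom p4 by simp
  have A: "\<forall>t. totally_balanced t \<longrightarrow> (\<exists>k::nat. denom (vdc t) = 4 ^ k)"
    unfolding eq totally_balanced_def by auto
  have B: "{t. totally_balanced t \<and> denom (vdc t) = 4 ^ k}
              = {t. totally_balanced t \<and> length (bin_digits t) = 2 * k}" for k
    unfolding eq ..
  have C: "real (card {t. totally_balanced t \<and> denom (vdc t) = 4 ^ k})
              = (1 / (real k + 1)) * real ((2 * k) choose k)" for k
  proof -
    have "real (card {t. totally_balanced t \<and> denom (vdc t) = 4 ^ k}) = real (card (S k k))"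
      unfolding B tb_set card_tb ..
    also have "\<dots> = real_of_int (int (card (S k k)))" by simp
    also have "\<dots> = real_of_int (G k k)" using card_S[of k k] by simp
    finally show ?thesis using G_catalan by simp
  qed
  show ?thesis using A B C by blast
qed

end
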